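(* Let $p$ be an odd prime, let $\Delta\in\mathbb{Z}$ with $\Delta\equiv 3\pmod 4$ be a quadratic non-residue modulo $p$, and let $\mathfrak{p}=p\mathbb{Z}[\sqrt{\Delta}]$ (so $\mathbb{Z}[\sqrt{\Delta}]/\mathfrak{p}$ is a field with $p^2$ elements, in which each $k+\sqrt{\Delta}$, $k\in\mathbb{Z}$, is invertible). Let $$C_p=\prod_{1\le s<t\le p-1}\frac{1}{(t+\sqrt{\Delta})(s+\sqrt{\Delta})}\in \mathbb{Z}[\sqrt{\Delta}]/\mathfrak{p}.$$ Then $$C_p^{\frac{p-1}{2}}\equiv\left(\frac{-2}{p}\right)\pmod{\mathfrak{p}},$$ where $\left(\frac{\cdot}{p}\right)$ is the Legendre symbol. *)

theory Defs
  imports Complex_Main "HOL-Number_Theory.Number_Theory"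
begin

definition zsqrt :: "int \<Rightarrow> complex set" where
  "zsqrt D = {of_int a + of_int b * csqrt (of_int D) | a b. True}"

definition cong_ideal :: "int \<Rightarrow> int \<Rightarrow> complex \<Rightarrow> complex \<Rightarrow> bool" where
  "cong_ideal D p x y \<longleftrightarrow>
     (\<exists>a b. x - y = of_int p * (of_int a + of_int b * csqrt (of_int D)))"

definition inv_mod :: "int \<Rightarrow> int \<Rightarrow> complex \<Rightarrow> complex" where
  "inv_mod D p x = (SOME y. y \<in> zsqrt D \<and> cong_ideal D p (x * y) 1)"

end

theory Submission
  imports Defs "HOL-Combinatorics.Stirling"
begin


lemma poly_vanish_mod:
  fixes p :: int and c :: "nat \<Rightarrow> int"
  assumes "prime p" "int n < p" "\<And>x::int. p dvd (\<Sum>k\<le>n. c k * x ^ k)"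
  shows "\<forall>k\<le>n. p dvd c k"
  using assms(2,3)
proof (induction n arbitrary: c)
  case 0
  then show ?case using "0.prems"(2)[of 0] by simp
next
  case (Suc n)
  define e where "e k j = (if j < k then of_nat (k choose j) else (0::int))" for k j
  define d where "d j = (\<Sum>k\<le>Suc n. c k * e k j)" for j
  have diff: "(x+1)^k - x^k = (\<Sum>j\<le>n. e k j * x^j)" if "k \<le> Suc n" for k and x :: int
  proof -
    have "(x+1)^k = (\<Sum>j\<le>k. of_nat (k choose j) * x^j)"
      using binomial_ring[of x 1 k] by simp
    also have "\<dots> = (\<Sum>j<k. of_nat (k choose j) * x^j) + x^k"
      by (simp add: lessThan_Suc_atMost[symmetric])
    finally have 1: "(x+1)^k - x^k = (\<Sum>j<k. of_nat (k choose j) * x^j)" by simp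
    have "(\<Sum>j\<le>n. e k j * x^j) = (\<Sum>j\<in>{..<k}. e k j * x^j)"
      by (rule sum.mono_neutral_right) (use that in \<open>auto simp: e_def\<close>)
    also have "\<dots> = (\<Sum>j<k. of_nat (k choose j) * x^j)" by (simp add: e_def)
    finally show ?thesis using 1 by simp
  qed
  have dsum: "(\<Sum>k\<le>Suc n. c k * (x+1)^k) - (\<Sum>k\<le>Suc n. c k * x^k) = (\<Sum>j\<le>n. d j * x^j)" for x :: int
  proof -
    have "(\<Sum>k\<le>Suc n. c k * (x+1)^k) - (\<Sum>k\<le>Suc n. c k * x^k)
        = (\<Sum>k\<le>Suc n. c k * ((x+1)^k - x^k))"
      by (simp add: sum_subtractf right_diff_distrib)
    also have "\<dots> = (\<Sum>k\<le>Suc n. \<Sum>j\<le>n. c k * e k j * x^j)"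
      by (rule sum.cong) (simp_all add: diff sum_distrib_left mult.assoc)
    also have "\<dots> = (\<Sum>j\<le>n. d j * x^j)"
      by (subst sum.swap) (simp only: d_def sum_distrib_right)
    finally show ?thesis .
  qed
  have "p dvd (\<Sum>j\<le>n. d j * x^j)" for x :: int
    using dsum[of x] Suc.prems(2)[of x] Suc.prems(2)[of "x+1"] by (metis dvd_diff)
  then have dd: "\<forall>j\<le>n. p dvd d j" using Suc.IH[of d] Suc.prems(1) by simp
  have "d n = c (Suc n) * of_nat (Suc n)"
  proof -
    have "d n = (\<Sum>k\<in>{Suc n}. c k * e k n)"
      unfolding d_def by (rule sum.mono_neutral_right) (auto simp: e_def)
    then show ?thesis by (simp add: e_def)
  qed
  with dd have "p dvd c (Suc n) * of_nat (Suc n)" by auto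
  moreover have "\<not> p dvd of_nat (Suc n)"
  proof
    assume "p dvd of_nat (Suc n)"
    then have "p \<le> of_nat (Suc n)" by (intro zdvd_imp_le) auto
    with Suc.prems(1) show False by simp
  qed
  ultimately have cS: "p dvd c (Suc n)" using Suc.prems prime_dvd_mult_iff assms(1) by blast
  have "p dvd (\<Sum>k\<le>n. c k * x^k)" for x :: int
  proof -
    have "(\<Sum>k\<le>Suc n. c k * x^k) = (\<Sum>k\<le>n. c k * x^k) + c (Suc n) * x ^ Suc n" by simp
    then show ?thesis using Suc.prems(2)[of x] cS
      by (metis dvd_add_left_iff dvd_mult2)
  qed
  then have rest: "\<forall>k\<le>n. p dvd c k" using Suc.IH[of c] Suc.prems(1) by simp
  show ?case
  proof (intro allI impI)
    fix k assume "k \<le> Suc n"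
    then show "p dvd c k" using cS rest by (cases "k = Suc n") auto
  qed
qed

lemma fermat_int:
  fixes q :: nat and x :: int
  assumes "prime q" "q > 2"
  shows "int q dvd x ^ q - x"
proof (cases "int q dvd x")
  case True
  have "x dvd x ^ q" using assms by (intro dvd_power) auto
  then show ?thesis using True by (meson dvd_diff dvd_trans)
next
  case False
  have e: "[Legendre x q = x ^ ((q - 1) div 2)] (mod q)"
    by (rule euler_criterion[OF assms])
  have "\<not> [x = 0] (mod q)" using False by (simp add: cong_0_iff)
  then have "Legendre x q = 1 \<or> Legendre x q = -1" by (auto simp: Legendre_def)
  then have "(Legendre x q)^2 = 1" by auto
  moreover have "[(Legendre x q)^2 = (x ^ ((q - 1) div 2))^2] (mod q)"
    using e cong_pow by blast
  moreover have "(x ^ ((q - 1) div 2))^2 = x ^ (q - 1)"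
  proof -
    have "odd q" using assms prime_odd_nat by auto
    then have "2 * ((q - 1) div 2) = q - 1" by (auto elim!: oddE)
    then show ?thesis by (simp add: power_mult[symmetric] mult.commute)
  qed
  ultimately have "[1 = x ^ (q - 1)] (mod q)" by simp
  then have "[x ^ (q - 1) = 1] (mod q)" by (rule cong_sym)
  then have "[x * x ^ (q - 1) = x * 1] (mod q)" using cong_scalar_left by blast
  moreover have "x * x ^ (q - 1) = x ^ q"
  proof -
    have "Suc (q - 1) = q" using assms by simp
    then show ?thesis by (metis power_Suc)
  qed
  ultimately have "[x ^ q = x] (mod q)" by simp
  then show ?thesis by (simp add: cong_iff_dvd_diff)
qed

lemma pochhammer_dvd:
  fixes p x :: int
  assumes "p > 0"
  shows "p dvd pochhammer x (nat p)"
proof -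
  define i where "i = nat ((- x) mod p)"
  have "i < nat p" using assms by (simp add: i_def)
  have ii: "int i = (- x) mod p" using assms by (simp add: i_def)
  have "(x + (- x) mod p) mod p = (x + - x) mod p" by (rule mod_add_right_eq)
  then have "p dvd x + of_nat i" using ii by (simp add: dvd_eq_mod_eq_0)
  have h: "x + of_nat i dvd (\<Prod>j\<in>{0..<nat p}. x + of_nat j)"
    using \<open>i < nat p\<close> by (intro dvd_prodI) auto
  show ?thesis unfolding pochhammer_prod
    using dvd_trans[OF \<open>p dvd x + of_nat i\<close> h] by simp
qed

lemma stirling_dvd:
  fixes q :: nat
  assumes "prime q" "q > 2" "2 \<le> k" "k < q"
  shows "int q dvd int (stirling q k)"
proof -
  define c where "c k = int (stirling q k) + (if k = 1 then 1 else 0)" for k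
  have "int q dvd (\<Sum>k\<le>q - 1. c k * x ^ k)" for x :: int
  proof -
    have q1: "{..q} = insert q {..q-1}" using assms by auto
    have "pochhammer x q = (\<Sum>k\<le>q. of_nat (stirling q k) * x ^ k)"
      by (simp add: stirling_pochhammer)
    also have "\<dots> = (\<Sum>k\<le>q-1. of_nat (stirling q k) * x ^ k) + x ^ q"
      using assms by (simp add: q1)
    finally have 1: "pochhammer x q = (\<Sum>k\<le>q-1. of_nat (stirling q k) * x ^ k) + x ^ q" .
    have "(\<Sum>k\<le>q - 1. c k * x ^ k) = (\<Sum>k\<le>q-1. of_nat (stirling q k) * x ^ k)
        + (\<Sum>k\<le>q - 1. (if k = 1 then 1 else 0) * x ^ k)"
      by (simp add: c_def distrib_right sum.distrib)
    also have "(\<Sum>k\<le>q - 1. (if k = 1 then 1 else 0) * x ^ k) = x"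
    proof -
      have "(\<Sum>k\<le>q - 1. (if k = 1 then 1 else 0) * x ^ k) = (\<Sum>k\<le>q - 1. if k = 1 then x else 0)"
        by (rule sum.cong) auto
      also have "\<dots> = x" using assms by (subst sum.delta) auto
      finally show ?thesis .
    qed
    finally have "(\<Sum>k\<le>q - 1. c k * x ^ k) = pochhammer x q - (x ^ q - x)"
      using 1 by simp
    moreover have "int q dvd pochhammer x q"
      using pochhammer_dvd[of "int q" x] assms by simp
    ultimately show ?thesis using fermat_int[OF assms(1,2), of x] by simp
  qed
  then have "\<forall>k\<le>q-1. int q dvd c k"
    using poly_vanish_mod[of "int q" "q - 1" c] assms by auto
  then have "int q dvd c k" using assms by auto
  then show ?thesis using assms by (simp add: c_def)
qed


lemma w_sq: "csqrt (of_int D) ^ 2 = of_int D" by simp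

lemma zs_iff: "x \<in> zsqrt D \<longleftrightarrow> (\<exists>a b. x = of_int a + of_int b * csqrt (of_int D))"
  by (auto simp: zsqrt_def)

lemma zs_int [simp]: "of_int a \<in> zsqrt D"
  unfolding zs_iff by (rule exI[of _ a], rule exI[of _ 0]) simp

lemma zs_0 [simp]: "0 \<in> zsqrt D" using zs_int[of 0 D] by simp
lemma zs_1 [simp]: "1 \<in> zsqrt D" using zs_int[of 1 D] by simp
lemma zs_nat [simp]: "of_nat n \<in> zsqrt D" using zs_int[of "int n" D] by simp

lemma zs_w [simp]: "csqrt (of_int D) \<in> zsqrt D"
  unfolding zs_iff by (rule exI[of _ 0], rule exI[of _ 1]) simp

lemma zs_add [simp]: "x \<in> zsqrt D \<Longrightarrow> y \<in> zsqrt D \<Longrightarrow> x + y \<in> zsqrt D"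
  unfolding zs_iff
  by (auto, rule_tac x="a + aa" in exI, rule_tac x="b + ba" in exI, simp add: algebra_simps)

lemma zs_uminus [simp]: "x \<in> zsqrt D \<Longrightarrow> - x \<in> zsqrt D"
  unfolding zs_iff
  by (auto, rule_tac x="- a" in exI, rule_tac x="- b" in exI, simp add: algebra_simps)

lemma zs_diff [simp]: "x \<in> zsqrt D \<Longrightarrow> y \<in> zsqrt D \<Longrightarrow> x - y \<in> zsqrt D"
  using zs_add[of x D "- y"] by simp

lemma zs_mult [simp]: "x \<in> zsqrt D \<Longrightarrow> y \<in> zsqrt D \<Longrightarrow> x * y \<in> zsqrt D"
proof -
  assume "x \<in> zsqrt D" "y \<in> zsqrt D"
  then obtain a b c d where x: "x = of_int a + of_int b * csqrt (of_int D)"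
    and y: "y = of_int c + of_int d * csqrt (of_int D)" unfolding zs_iff by blast
  have "x * y = of_int (a*c + b*d*D) + of_int (a*d + b*c) * csqrt (of_int D)"
    unfolding x y using w_sq[of D] by (simp add: algebra_simps power2_eq_square)
  then show ?thesis unfolding zs_iff by blast
qed

lemma zs_pow [simp]: "x \<in> zsqrt D \<Longrightarrow> x ^ n \<in> zsqrt D"
  by (induction n) auto

lemma zs_prod: "(\<And>i. i \<in> A \<Longrightarrow> f i \<in> zsqrt D) \<Longrightarrow> prod f A \<in> zsqrt D"
  by (induction A rule: infinite_finite_induct) auto

lemma cg_iff: "cong_ideal D p x y \<longleftrightarrow> (\<exists>z\<in>zsqrt D. x - y = of_int p * z)"
  unfolding cong_ideal_def by (auto simp: zsqrt_def)

lemma cg_refl [simp]: "cong_ideal D p x x"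
  unfolding cg_iff by (rule bexI[of _ 0]) auto

lemma cg_sym: "cong_ideal D p x y \<Longrightarrow> cong_ideal D p y x"
  unfolding cg_iff by (auto intro!: bexI[of _ "- z" for z] simp: algebra_simps)

lemma cg_trans: "cong_ideal D p x y \<Longrightarrow> cong_ideal D p y z \<Longrightarrow> cong_ideal D p x z"
  unfolding cg_iff
proof (elim bexE)
  fix u v assume "u \<in> zsqrt D" "x - y = of_int p * u" "v \<in> zsqrt D" "y - z = of_int p * v"
  then show "\<exists>w\<in>zsqrt D. x - z = of_int p * w"
    by (intro bexI[of _ "u + v"]) (auto simp: algebra_simps)
qed

lemma cg_add: "cong_ideal D p x y \<Longrightarrow> cong_ideal D p x' y' \<Longrightarrow> cong_ideal D p (x + x') (y + y')"
  unfolding cg_iff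
proof (elim bexE)
  fix u v assume "u \<in> zsqrt D" "x - y = of_int p * u" "v \<in> zsqrt D" "x' - y' = of_int p * v"
  then show "\<exists>w\<in>zsqrt D. x + x' - (y + y') = of_int p * w"
    by (intro bexI[of _ "u + v"]) (auto simp: algebra_simps)
qed

lemma cg_mult:
  assumes "cong_ideal D p x y" "cong_ideal D p x' y'" "x \<in> zsqrt D" "y' \<in> zsqrt D"
  shows "cong_ideal D p (x * x') (y * y')"
  using assms(1,2) unfolding cg_iff
proof (elim bexE)
  fix u v assume "u \<in> zsqrt D" "x - y = of_int p * u" "v \<in> zsqrt D" "x' - y' = of_int p * v"
  moreover have "x * x' - y * y' = x * (x' - y') + (x - y) * y'" by (simp add: algebra_simps)
  ultimately have "x * x' - y * y' = of_int p * (x * v + u * y')" by (simp add: algebra_simps)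
  moreover have "x * v + u * y' \<in> zsqrt D" using assms(3,4) \<open>u \<in> zsqrt D\<close> \<open>v \<in> zsqrt D\<close> by simp
  ultimately show "\<exists>w\<in>zsqrt D. x * x' - y * y' = of_int p * w" by blast
qed

lemma cg_pow:
  assumes "cong_ideal D p x y" "x \<in> zsqrt D" "y \<in> zsqrt D"
  shows "cong_ideal D p (x ^ n) (y ^ n)"
  by (induction n) (auto intro!: cg_mult assms zs_pow)

lemma cg_prod:
  assumes "\<And>i. i \<in> A \<Longrightarrow> cong_ideal D p (f i) (g i)"
    "\<And>i. i \<in> A \<Longrightarrow> f i \<in> zsqrt D" "\<And>i. i \<in> A \<Longrightarrow> g i \<in> zsqrt D"
  shows "cong_ideal D p (prod f A) (prod g A)"
  using assms
proof (induction A rule: infinite_finite_induct)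
  case (insert a A)
  then show ?case by (simp, intro cg_mult zs_prod) auto
qed auto

lemma cg_sum:
  assumes "\<And>i. i \<in> A \<Longrightarrow> cong_ideal D p (f i) (g i)"
  shows "cong_ideal D p (sum f A) (sum g A)"
  using assms
proof (induction A rule: infinite_finite_induct)
  case (insert a A)
  then show ?case by (simp, intro cg_add) auto
qed auto

lemma cg_int: "p dvd (a - b) \<Longrightarrow> cong_ideal D p (of_int a) (of_int b)"
proof -
  assume "p dvd (a - b)"
  then obtain k where "a - b = p * k" by (elim dvdE)
  then have "(of_int a - of_int b :: complex) = of_int p * of_int k"
    by (metis of_int_diff of_int_mult)
  then show ?thesis unfolding cg_iff by (intro bexI[of _ "of_int k"]) auto
qed

lemma cg_zero_mult: "p dvd a \<Longrightarrow> z \<in> zsqrt D \<Longrightarrow> cong_ideal D p (of_int a * z) 0"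
proof -
  assume "p dvd a" "z \<in> zsqrt D"
  then obtain k where "a = p * k" by (elim dvdE)
  then have "of_int a * z - 0 = of_int p * (of_int k * z)" by simp
  then show ?thesis unfolding cg_iff using \<open>z \<in> zsqrt D\<close> by (intro bexI[of _ "of_int k * z"]) auto
qed


lemma pair_prod:
  fixes f :: "int \<Rightarrow> 'a::comm_monoid_mult"
  shows "(\<Prod>(s, t) \<in> {(s, t). 1 \<le> s \<and> s < t \<and> t \<le> int m}. f t * f s) = (\<Prod>k\<in>{1..int m}. f k) ^ (m - 1)"
proof (induction m)
  case 0
  have e: "{(s, t). 1 \<le> s \<and> s < t \<and> t \<le> (0::int)} = {}" by auto
  show ?case by (simp add: e)
next
  case (Suc m)
  show ?case
  proof (cases "m = 0")
    case True
    have e: "{(s, t). 1 \<le> s \<and> s < t \<and> t \<le> (1::int)} = {}" by auto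
    show ?thesis using True by (simp add: e)
  next
    case False
    define S where "S = {(s, t). 1 \<le> s \<and> s < t \<and> t \<le> int m}"
    define T where "T = (\<lambda>s. (s, int m + 1)) ` {1..int m}"
    define PP where "PP = (\<Prod>k\<in>{1..int m}. f k)"
    have eq: "{(s, t). 1 \<le> s \<and> s < t \<and> t \<le> int (Suc m)} = S \<union> T"
      unfolding S_def T_def by auto
    have finS: "finite S"
    proof (rule finite_subset)
      show "S \<subseteq> {1..int m} \<times> {1..int m}" unfolding S_def by auto
    qed auto
    have finT: "finite T" unfolding T_def by auto
    have disj: "S \<inter> T = {}" unfolding S_def T_def by auto
    have "(\<Prod>(s, t) \<in> T. f t * f s) = (\<Prod>s\<in>{1..int m}. f (int m + 1) * f s)"
      unfolding T_def by (subst prod.reindex) (auto simp: inj_on_def)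
    also have "\<dots> = f (int m + 1) ^ m * PP"
      unfolding PP_def by (simp add: prod.distrib)
    finally have PT: "(\<Prod>(s, t) \<in> T. f t * f s) = f (int m + 1) ^ m * PP" .
    have ins: "{1..int (Suc m)} = insert (int m + 1) {1..int m}" by auto
    have "(\<Prod>(s, t) \<in> {(s, t). 1 \<le> s \<and> s < t \<and> t \<le> int (Suc m)}. f t * f s)
        = (\<Prod>(s, t) \<in> S. f t * f s) * (\<Prod>(s, t) \<in> T. f t * f s)"
      unfolding eq by (rule prod.union_disjoint[OF finS finT disj])
    also have "\<dots> = PP ^ (m - 1) * (f (int m + 1) ^ m * PP)"
      using Suc.IH PT unfolding S_def PP_def by simp
    also have "\<dots> = (f (int m + 1) * PP) ^ m"
    proof -
      have "PP ^ (m - 1) * PP = PP ^ m" using False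
        by (metis Suc_pred' bot_nat_0.not_eq_extremum power_Suc2)
      then show ?thesis by (metis power_mult_distrib mult.assoc mult.commute)
    qed
    also have "\<dots> = (\<Prod>k\<in>{1..int (Suc m)}. f k) ^ (Suc m - 1)"
      unfolding ins PP_def by simp
    finally show ?thesis .
  qed
qed

lemma inv_ok:
  fixes p D k :: int
  assumes "prime p" "\<not> QuadRes p D"
  shows "inv_mod D p (of_int k + csqrt (of_int D)) \<in> zsqrt D \<and>
         cong_ideal D p ((of_int k + csqrt (of_int D)) * inv_mod D p (of_int k + csqrt (of_int D))) 1"
proof -
  have "\<not> p dvd (k^2 - D)"
  proof
    assume "p dvd (k^2 - D)"
    then have "[k^2 = D] (mod p)" by (simp add: cong_iff_dvd_diff)
    then show False using assms(2) unfolding QuadRes_def by blast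
  qed
  then have "coprime (k^2 - D) p" using assms(1)
    by (simp add: prime_imp_coprime coprime_commute)
  then obtain u where u: "[(k^2 - D) * u = 1] (mod p)" using cong_solve_coprime_int by blast
  define y where "y = of_int u * (of_int k - csqrt (of_int D))"
  have yz: "y \<in> zsqrt D" unfolding y_def by simp
  have "(of_int k + csqrt (of_int D)) * y = of_int ((k^2 - D) * u)"
    unfolding y_def using w_sq[of D] by (simp add: algebra_simps power2_eq_square)
  moreover have "cong_ideal D p (of_int ((k^2 - D) * u)) (of_int 1)"
    using u by (intro cg_int) (simp add: cong_iff_dvd_diff)
  ultimately have "cong_ideal D p ((of_int k + csqrt (of_int D)) * y) 1" by simp
  with yz have "\<exists>y. y \<in> zsqrt D \<and> cong_ideal D p ((of_int k + csqrt (of_int D)) * y) 1" by blast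
  then show ?thesis unfolding inv_mod_def by (rule someI_ex)
qed


lemma zs_numeral [simp]: "numeral n \<in> zsqrt D" using zs_int[of "numeral n" D] by simp

lemma cg_by: "x - y = of_int a * z \<Longrightarrow> p dvd a \<Longrightarrow> z \<in> zsqrt D \<Longrightarrow> cong_ideal D p x y"
  unfolding cg_iff by (elim dvdE) (auto intro!: bexI[of _ "of_int k * z" for k])

lemma cg_diff0: "cong_ideal D p x y \<Longrightarrow> cong_ideal D p (x - y) 0"
  unfolding cg_iff by auto

lemma cg_from0: "cong_ideal D p (x - y) 0 \<Longrightarrow> cong_ideal D p x y"
  unfolding cg_iff by auto


lemma consider4:
  fixes k q :: nat
  assumes "k \<le> q" "q > 2"
  shows "k = 0 \<or> k = 1 \<or> k = q \<or> (2 \<le> k \<and> k < q)"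
  using assms by linarith

lemma stirling_term_cong:
  fixes q k :: nat and D :: int
  assumes qprime: "prime q" and q2: "q > 2" and k: "k \<le> q"
  shows "cong_ideal D (int q) (of_nat (stirling q k) * csqrt (of_int D) ^ k)
           ((if k = q then csqrt (of_int D) ^ q else 0) + (if k = 1 then - csqrt (of_int D) else 0))"
proof -
  have wz: "csqrt (of_int D) \<in> zsqrt D" by simp
  have "k = 0 \<or> k = 1 \<or> k = q \<or> (2 \<le> k \<and> k < q)" using consider4[OF k q2] .
  moreover have ?thesis if "k = 0" using that q2 by simp
  moreover have ?thesis if k1: "k = 1"
  proof -
    have st: "stirling q 1 = fact (q - 1)"
      using q2 stirling_Suc_n_1[of "q - 1"] by simp
    have "[fact (q - 1) = - 1] (mod int q)" using wilson_theorem[OF qprime] by simp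
    then have dv: "int q dvd fact (q - 1) + 1" by (simp add: cong_iff_dvd_diff)
    have eq: "of_nat (stirling q k) * csqrt (of_int D) ^ k -
           ((if k = q then csqrt (of_int D) ^ q else 0) + (if k = 1 then - csqrt (of_int D) else 0))
          = of_int (fact (q - 1) + 1) * csqrt (of_int D)"
      using k1 q2 st by (simp add: algebra_simps)
    show ?thesis by (rule cg_by[OF eq dv wz])
  qed
  moreover have ?thesis if "k = q" using that q2 by simp
  moreover have ?thesis if k4: "2 \<le> k \<and> k < q"
  proof -
    have dv: "int q dvd int (stirling q k)" using stirling_dvd[OF qprime q2] k4 by auto
    have eq: "of_nat (stirling q k) * csqrt (of_int D) ^ k -
           ((if k = q then csqrt (of_int D) ^ q else 0) + (if k = 1 then - csqrt (of_int D) else 0))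
          = of_int (int (stirling q k)) * csqrt (of_int D) ^ k"
      using k4 by simp
    show ?thesis by (rule cg_by[OF eq dv zs_pow[OF wz]])
  qed
  ultimately show ?thesis by blast
qed

lemma poch_cong:
  fixes q :: nat and D :: int
  assumes qprime: "prime q" and q2: "q > 2"
  shows "cong_ideal D (int q) (pochhammer (csqrt (of_int D)) q) (csqrt (of_int D) ^ q - csqrt (of_int D))"
proof -
  define w where "w = csqrt (of_int D)"
  define g where "g k = (if k = q then w ^ q else 0) + (if k = 1 then - w else 0)" for k
  have poch: "pochhammer w q = (\<Sum>k\<le>q. of_nat (stirling q k) * w ^ k)"
    by (simp add: stirling_pochhammer)
  have c: "cong_ideal D (int q) (\<Sum>k\<le>q. of_nat (stirling q k) * w ^ k) (\<Sum>k\<le>q. g k)"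
  proof (rule cg_sum)
    fix k assume "k \<in> {..q}"
    then have "k \<le> q" by simp
    from stirling_term_cong[OF qprime q2 this, of D]
    show "cong_ideal D (int q) (of_nat (stirling q k) * w ^ k) (g k)"
      unfolding g_def w_def .
  qed
  have s: "(\<Sum>k\<le>q. g k) = w ^ q - w"
    using q2 unfolding g_def by (simp add: sum.distrib)
  have "cong_ideal D (int q) (pochhammer w q) (w ^ q - w)" using c unfolding poch s .
  then show ?thesis unfolding w_def .
qed

lemma wq_cong:
  fixes q :: nat and D :: int
  assumes qprime: "prime q" and q2: "q > 2" and nq: "\<not> QuadRes (int q) D"
  shows "cong_ideal D (int q) (csqrt (of_int D) ^ q) (- csqrt (of_int D))"
proof -
  define p where "p = int q"
  define w where "w = csqrt (of_int D)"
  have ww: "w * w = of_int D" unfolding w_def using w_sq[of D] by (simp add: power2_eq_square)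
  have oddq: "odd q" using qprime q2 prime_odd_nat by auto
  define h where "h = (q - 1) div 2"
  have h2: "q - 1 = 2 * h" unfolding h_def using oddq by (auto elim!: oddE)
  have notD0: "\<not> p dvd D"
  proof
    assume "p dvd D"
    then have "[0^2 = D] (mod p)" by (simp add: cong_iff_dvd_diff)
    then show False using nq unfolding QuadRes_def p_def by blast
  qed
  have LD: "Legendre D p = -1"
    using notD0 nq unfolding Legendre_def p_def by (simp add: cong_0_iff)
  have "[Legendre D (int q) = D ^ ((q - 1) div 2)] (mod int q)"
    by (rule euler_criterion[OF qprime q2])
  then have "[D ^ h = -1] (mod p)" using LD p_def h_def by (simp add: cong_sym_eq)
  then have "p dvd D ^ h + 1" by (simp add: cong_iff_dvd_diff)
  then obtain t1 where t1: "D ^ h + 1 = p * t1" by (elim dvdE)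
  have Wq: "w ^ q = w * of_int (D ^ h)"
  proof -
    have "q = Suc (2 * h)" using h2 q2 by simp
    then have "w ^ q = w * (w * w) ^ h" by (simp add: power_mult power2_eq_square)
    then show ?thesis using ww by simp
  qed
  have "w ^ q - - w = w * of_int (D ^ h + 1)" using Wq by (simp add: algebra_simps)
  also have "\<dots> = of_int p * (of_int t1 * w)" using t1 by simp
  finally have eq: "w ^ q - - w = of_int p * (of_int t1 * w)" .
  have "cong_ideal D p (w ^ q) (- w)"
    unfolding cg_iff using eq by (intro bexI[of _ "of_int t1 * w"]) (simp_all add: w_def)
  then show ?thesis unfolding p_def w_def .
qed

lemma pochP:
  fixes q :: nat and w :: complex
  assumes q2: "q > 2"
  shows "pochhammer w q = w * (\<Prod>k\<in>{1..int q - 1}. of_int k + w)"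
proof -
  have set1: "{0..<q} = insert 0 {1..<q}" using q2 by auto
  have set2: "{1..int q - 1} = int ` {1..<q}"
    unfolding image_int_atLeastLessThan by auto
  have "pochhammer w q = w * (\<Prod>i\<in>{1..<q}. w + of_nat i)"
    unfolding pochhammer_prod set1 by simp
  also have "(\<Prod>i\<in>{1..<q}. w + of_nat i) = (\<Prod>k\<in>{1..int q - 1}. of_int k + w)"
    unfolding set2 by (subst prod.reindex) (auto simp: add.commute)
  finally show ?thesis .
qed

lemma P_cong:
  fixes q :: nat and D :: int
  assumes qprime: "prime q" and q2: "q > 2" and nq: "\<not> QuadRes (int q) D"
  shows "cong_ideal D (int q) (\<Prod>k\<in>{1..int q - 1}. of_int k + csqrt (of_int D)) (-2)"
proof -
  define p where "p = int q"
  define w where "w = csqrt (of_int D)"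
  define P where "P = (\<Prod>k\<in>{1..int q - 1}. of_int k + w)"
  have ww: "w * w = of_int D" unfolding w_def using w_sq[of D] by (simp add: power2_eq_square)
  have wz: "w \<in> zsqrt D" unfolding w_def by simp
  have Pz: "P \<in> zsqrt D" unfolding P_def by (rule zs_prod) (simp add: wz)
  have cgW: "cong_ideal D p (w ^ q) (- w)" using wq_cong[OF qprime q2 nq] unfolding p_def w_def .
  have cgpoch: "cong_ideal D p (w * P) (w ^ q - w)"
    using poch_cong[OF qprime q2, of D] pochP[OF q2, of w] unfolding P_def p_def w_def by simp
  have "cong_ideal D p (w ^ q - w) (- w - w)"
    using cg_add[OF cgW cg_refl[of D p "- w"]] by simp
  then have "cong_ideal D p (w * P) (- w - w)"
    using cg_trans[OF cgpoch] by blast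
  then have "cong_ideal D p (w * P - (- w - w)) 0" by (rule cg_diff0)
  then have "cong_ideal D p (w * (w * P - (- w - w))) (w * 0)"
    by (rule cg_mult[OF cg_refl]) (simp_all add: wz)
  moreover have "w * (w * P - (- w - w)) = of_int D * (P + 2)"
    using ww by (simp add: algebra_simps)
  ultimately have cD: "cong_ideal D p (of_int D * (P + 2)) 0" by simp
  have notD0: "\<not> p dvd D"
  proof
    assume "p dvd D"
    then have "[0^2 = D] (mod p)" by (simp add: cong_iff_dvd_diff)
    then show False using nq unfolding QuadRes_def p_def by blast
  qed
  have pprime: "prime p" using qprime p_def by simp
  have "coprime p D" by (rule prime_imp_coprime[OF pprime notD0])
  then have "coprime D p" by (simp add: coprime_commute)
  then obtain u where u: "[D * u = 1] (mod p)" using cong_solve_coprime_int by blast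
  have "cong_ideal D p (of_int u * (of_int D * (P + 2))) (of_int u * 0)"
    by (rule cg_mult[OF cg_refl cD]) (simp_all add: Pz)
  then have c1: "cong_ideal D p (of_int u * (of_int D * (P + 2))) 0" by simp
  have e2: "P + 2 - of_int u * (of_int D * (P + 2)) = of_int (1 - D * u) * (P + 2)"
    by (simp add: algebra_simps)
  have "[1 = D * u] (mod p)" using u by (rule cong_sym)
  then have d2: "p dvd 1 - D * u" by (simp add: cong_iff_dvd_diff)
  have c2: "cong_ideal D p (P + 2) (of_int u * (of_int D * (P + 2)))"
    by (rule cg_by[OF e2 d2]) (simp add: Pz)
  have "cong_ideal D p (P + 2) 0" using cg_trans[OF c2 c1] .
  then have "cong_ideal D p (P - (-2)) 0" by simp
  then have "cong_ideal D p P (-2)" by (rule cg_from0)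
  then show ?thesis unfolding P_def p_def w_def .
qed

theorem lemma2p3:
  fixes p :: int and D :: int
  assumes "prime p" and "odd p"
    and "D mod 4 = 3"
    and "\<not> QuadRes p D"
  shows "cong_ideal D p
     ((\<Prod>(s, t) \<in> {(s, t). 1 \<le> s \<and> s < t \<and> t \<le> p - 1}.
         inv_mod D p (of_int t + csqrt (of_int D)) * inv_mod D p (of_int s + csqrt (of_int D)))
       ^ nat ((p - 1) div 2))
     (of_int (Legendre (-2) p))"
proof -
  define q where "q = nat p"
  have pq: "p = int q" using assms(1) prime_ge_0_int q_def by simp
  have qprime: "prime q" using assms(1) pq by simp
  have q2: "q > 2"
  proof -
    have "q \<ge> 2" using qprime prime_ge_2_nat by blast
    moreover have "q \<noteq> 2" using assms(2) pq by auto
    ultimately show ?thesis by simp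
  qed
  have oddq: "odd q" using assms(2) pq by simp
  define w where "w = csqrt (of_int D)"
  have wz [simp]: "w \<in> zsqrt D" unfolding w_def by simp
  define h where "h = (q - 1) div 2"
  have hnat: "nat ((p - 1) div 2) = h" unfolding h_def pq using q2 by (simp add: nat_div_distrib)
  have nq: "\<not> QuadRes (int q) D" using assms(4) pq by simp
  have Pm2: "cong_ideal D p (\<Prod>k\<in>{1..p-1}. of_int k + w) (-2)"
    using P_cong[OF qprime q2 nq] unfolding pq w_def .
  define P where "P = (\<Prod>k\<in>{1..p-1}. of_int k + w)"
  have Pz: "P \<in> zsqrt D" unfolding P_def w_def by (rule zs_prod) simp
  have Pm2: "cong_ideal D p P (-2)" using Pm2 unfolding P_def .
  define Y where "Y = (\<Prod>k\<in>{1..p-1}. inv_mod D p (of_int k + w))"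
  have invk: "inv_mod D p (of_int k + w) \<in> zsqrt D \<and> cong_ideal D p ((of_int k + w) * inv_mod D p (of_int k + w)) 1" for k
    using inv_ok[OF assms(1) assms(4), of k] unfolding w_def .
  have Yz: "Y \<in> zsqrt D" unfolding Y_def using invk by (intro zs_prod) auto
  have e1: "P * Y = (\<Prod>k\<in>{1..p-1}. (of_int k + w) * inv_mod D p (of_int k + w))"
    unfolding P_def Y_def by (simp add: prod.distrib)
  have c1: "cong_ideal D p (\<Prod>k\<in>{1..p-1}. (of_int k + w) * inv_mod D p (of_int k + w)) (\<Prod>k\<in>{1..p-1}. 1)"
    using invk by (intro cg_prod) auto
  have PY: "cong_ideal D p (P * Y) 1" using e1 c1 by simp
  have "cong_ideal D p ((-2) * Y) (P * Y)"
    by (rule cg_mult[OF cg_sym[OF Pm2] cg_refl]) (auto simp: Yz)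
  then have m2Y: "cong_ideal D p ((-2) * Y) 1" using PY cg_trans by blast
  have pm1: "p - 1 = int (q - 1)" using pq q2 by simp
  have prodC: "(\<Prod>(s, t) \<in> {(s, t). 1 \<le> s \<and> s < t \<and> t \<le> p - 1}.
         inv_mod D p (of_int t + csqrt (of_int D)) * inv_mod D p (of_int s + csqrt (of_int D))) = Y ^ (q - 2)"
  proof -
    have "(\<Prod>(s, t) \<in> {(s, t). 1 \<le> s \<and> s < t \<and> t \<le> int (q - 1)}.
         inv_mod D p (of_int t + csqrt (of_int D)) * inv_mod D p (of_int s + csqrt (of_int D)))
       = (\<Prod>k\<in>{1..int (q - 1)}. inv_mod D p (of_int k + csqrt (of_int D))) ^ (q - 1 - 1)"
      by (rule pair_prod)
    moreover have "q - 1 - 1 = q - 2" by simp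
    ultimately show ?thesis unfolding Y_def w_def pm1 by simp
  qed
  define N where "N = (q - 2) * h"
  have YN: "(Y ^ (q - 2)) ^ h = Y ^ N" by (simp add: N_def power_mult)
  define L where "L = Legendre (-2) p"
  have "[Legendre (-2) (int q) = (-2) ^ ((q - 1) div 2)] (mod int q)"
    by (rule euler_criterion[OF qprime q2])
  then have eL: "[L = (-2) ^ h] (mod p)" using pq h_def L_def by simp
  have not2: "\<not> [-2 = 0] (mod p)"
  proof
    assume "[-2 = 0] (mod p)"
    then have "p dvd 2" by (simp add: cong_0_iff)
    then have "p \<le> 2" by (intro zdvd_imp_le) auto
    then show False using pq q2 by simp
  qed
  have L1: "L = 1 \<or> L = -1" using not2 unfolding L_def Legendre_def by auto
  have LL: "L * L = 1" using L1 by auto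
  have "(-2 :: int) ^ N = ((-2) ^ h) ^ (q - 2)" by (simp add: N_def power_mult mult.commute)
  moreover have "[((-2) ^ h) ^ (q - 2) = L ^ (q - 2)] (mod p)"
    by (rule cong_pow[OF cong_sym[OF eL]])
  moreover have "L ^ (q - 2) = L"
  proof -
    have "odd (q - 2)" using oddq q2 by simp
    then show ?thesis using L1 by auto
  qed
  ultimately have "[(-2 :: int) ^ N = L] (mod p)" by simp
  then have dvdN: "p dvd (-2) ^ N - L" by (simp add: cong_iff_dvd_diff)
  have "cong_ideal D p (((-2) * Y) ^ N) (1 ^ N)"
    by (rule cg_pow[OF m2Y]) (auto simp: Yz)
  moreover have "((-2) * Y) ^ N = of_int ((-2) ^ N) * Y ^ N"
    by (simp only: power_mult_distrib of_int_power of_int_minus of_int_numeral)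
  ultimately have A: "cong_ideal D p (of_int ((-2) ^ N) * Y ^ N) 1" by simp
  have B: "cong_ideal D p (of_int ((-2) ^ N) * Y ^ N) (of_int L * Y ^ N)"
  proof (rule cg_by[where a = "(-2) ^ N - L" and z = "Y ^ N"])
    show "of_int ((-2) ^ N) * Y ^ N - of_int L * Y ^ N = of_int ((-2) ^ N - L) * Y ^ N"
      by (simp only: of_int_diff left_diff_distrib)
  qed (auto simp: dvdN Yz)
  have C: "cong_ideal D p (of_int L * Y ^ N) 1" using cg_trans[OF cg_sym[OF B] A] .
  have "cong_ideal D p (of_int L * (of_int L * Y ^ N)) (of_int L * 1)"
    by (rule cg_mult[OF cg_refl C]) auto
  moreover have "of_int L * (of_int L * Y ^ N) = Y ^ N"
  proof -
    have "(of_int L * of_int L :: complex) = 1" using LL by (metis of_int_1 of_int_mult)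
    then show ?thesis by (metis mult.assoc mult_1)
  qed
  ultimately have final: "cong_ideal D p (Y ^ N) (of_int L)" by simp
  show ?thesis unfolding prodC hnat YN L_def[symmetric] by (rule final)
qed

end
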